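(* Let $M$ be a matching of size $k$ and let $N$ be a matching of size $k+2$ having a block $K$ such that $N-K$ equals $M$ up to cyclic relabeling. Then the degree of $N$ in $\mathbf{DCM}_{k+2}$ equals the degree of $M$ in $\mathbf{DCM}_k$.
   Context: Let $k\ge 1$ and let $X_{2k}=\{P_1,\dots,P_{2k}\}$ be $2k$ points in convex position in the plane, labeled in clockwise cyclic order; indices are taken modulo $2k$. A matching of $X_{2k}$ means a set of $k$ pairwise non-crossing straight segments (edges) with endpoints in $X_{2k}$ covering every point exactly once; its size is $k$. Two matchings $M,M'$ of $X_{2k}$ are disjoint compatible if they have no common edge and no edge of $M$ crosses an edge of $M'$. $\mathbf{DCM}_k$ is the graph whose vertices are the matchings of $X_{2k}$, two being adjacent iff they are disjoint compatible; the degree of a vertex of $\mathbf{DCM}_k$ is invariant under cyclic relabeling of the points. A block of a matching $M$ is a pair of edges $\{P_iP_{i+3},P_{i+1}P_{i+2}\}\subseteq M$; an antiblock is a pair of edges $\{P_iP_{i+1},P_{i+2}P_{i+3}\}\subseteq M$; a separated pair is a block or an antiblock. If $K$ is a separated pair of a matching $N$ of size $k+2$, then $N-K$ denotes the set $N\setminus K$, regarded as a matching of the remaining $2k$ points (which are in convex position) with their inherited cyclic order, i.e. as a matching of size $k$ defined up to cyclic relabeling. *)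

theory Defs
  imports Main
begin

text \<open>Points P_1..P_{2k} are encoded as the labels 0..2k-1 in clockwise order. Two chords of points in convex position
  cross iff their endpoints interleave in the cyclic (equivalently, linear) order.\<close>

definition crosses :: "nat set \<Rightarrow> nat set \<Rightarrow> bool" where
  "crosses e f \<longleftrightarrow>
     (\<exists>a b c d. ((e = {a,b} \<and> f = {c,d}) \<or> (e = {c,d} \<and> f = {a,b})) \<and> a < c \<and> c < b \<and> b < d)"

definition is_matching :: "nat \<Rightarrow> nat set set \<Rightarrow> bool" where
  "is_matching k M \<longleftrightarrow>
     (\<forall>e\<in>M. \<exists>a b. e = {a,b} \<and> a < b \<and> b < 2*k) \<and>
     (\<forall>v<2*k. \<exists>!e. e \<in> M \<and> v \<in> e) \<and>
     (\<forall>e\<in>M. \<forall>f\<in>M. \<not> crosses e f)"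

definition disjoint_compatible :: "nat set set \<Rightarrow> nat set set \<Rightarrow> bool" where
  "disjoint_compatible M M' \<longleftrightarrow> M \<inter> M' = {} \<and> (\<forall>e\<in>M. \<forall>f\<in>M'. \<not> crosses e f)"

definition dcm_degree :: "nat \<Rightarrow> nat set set \<Rightarrow> nat" where
  "dcm_degree k M = card {M'. is_matching k M' \<and> disjoint_compatible M M'}"

definition rot :: "nat \<Rightarrow> nat \<Rightarrow> nat set set \<Rightarrow> nat set set" where
  "rot m s M = (\<lambda>e. (\<lambda>x. (x + s) mod m) ` e) ` M"

definition block_at :: "nat \<Rightarrow> nat \<Rightarrow> nat set set" where
  "block_at n i = {{i mod (2*n), (i+3) mod (2*n)}, {(i+1) mod (2*n), (i+2) mod (2*n)}}"

text \<open>N minus the pair K at position i (occupying points i..i+3), the remaining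
  2n-4 points relabeled in inherited cyclic order as 0..2n-5, point i+4 becoming 0.\<close>
definition remove_pair :: "nat \<Rightarrow> nat \<Rightarrow> nat set set \<Rightarrow> nat set set \<Rightarrow> nat set set" where
  "remove_pair n i K N =
     (\<lambda>e. (\<lambda>x. (x + 2*n - (i+4) mod (2*n)) mod (2*n)) ` e) ` (N - K)"

end

theory Submission
  imports Defs
begin


definition cyc :: "nat \<Rightarrow> nat \<Rightarrow> nat \<Rightarrow> bool" where
  "cyc a b c \<longleftrightarrow> (a<b \<and> b<c) \<or> (b<c \<and> c<a) \<or> (c<a \<and> a<b)"

lemma cr_intro1: "w<x \<Longrightarrow> x<y \<Longrightarrow> y<z \<Longrightarrow> crosses {w,y} {x,z}"
  unfolding crosses_def by blast
lemma cr_intro2: "w<x \<Longrightarrow> x<y \<Longrightarrow> y<z \<Longrightarrow> crosses {x,z} {w,y}"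
  unfolding crosses_def by blast

lemma crosses_cyc: "crosses {a,b} {c,d} \<longleftrightarrow> (cyc a c b \<and> cyc b d a) \<or> (cyc a d b \<and> cyc b c a)"
proof
  assume "crosses {a,b} {c,d}"
  then show "(cyc a c b \<and> cyc b d a) \<or> (cyc a d b \<and> cyc b c a)"
    unfolding crosses_def cyc_def by (auto simp: doubleton_eq_iff)
next
  assume "(cyc a c b \<and> cyc b d a) \<or> (cyc a d b \<and> cyc b c a)"
  then show "crosses {a,b} {c,d}"
    unfolding cyc_def
    by (elim disjE conjE; (metis cr_intro1 cr_intro2 insert_commute less_asym)?)
qed



definition cp :: "nat set \<Rightarrow> (nat\<Rightarrow>nat) \<Rightarrow> bool" where
  "cp U \<phi> \<longleftrightarrow> (\<forall>a\<in>U. \<forall>b\<in>U. \<forall>c\<in>U. cyc (\<phi> a) (\<phi> b) (\<phi> c) = cyc a b c)"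

definition img :: "(nat\<Rightarrow>nat) \<Rightarrow> nat set set \<Rightarrow> nat set set" where
  "img \<phi> X = (\<lambda>e. \<phi> ` e) ` X"

lemma rot_eq: fixes x m t :: nat assumes "x < m" shows "(x + t) mod m = (if x + t mod m < m then x + t mod m else x + t mod m - m)"
proof -
  have "(x + t) mod m = (x + t mod m) mod m" by (simp add: mod_add_right_eq)
  also have "\<dots> = (if x + t mod m < m then x + t mod m else x + t mod m - m)"
  proof (cases "x + t mod m < m")
    case False
    then have "(x + t mod m) mod m = (x + t mod m - m) mod m" by (simp add: le_mod_geq)
    also have "\<dots> = x + t mod m - m"
    proof -
      have "t mod m < m" using assms by simp
      then have "x + t mod m - m < m" using assms by linarith
      then show ?thesis by (rule mod_less)
    qed
    finally show ?thesis using False by simp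
  qed simp
  finally show ?thesis .
qed

lemma cyc_shift: fixes a b c t m :: nat
  assumes "a<m" "b<m" "c<m" "t<m"
  shows "cyc (if a + t < m then a + t else a + t - m) (if b + t < m then b + t else b + t - m)
     (if c + t < m then c + t else c + t - m) = cyc a b c"
  using assms unfolding cyc_def by (auto split: if_splits)

lemma rot_cp: fixes m t :: nat assumes "0 < m" shows "cp {..<m} (\<lambda>x. (x + t) mod m)"
  unfolding cp_def
proof (intro ballI)
  fix a b c assume "a \<in> {..<m}" "b \<in> {..<m}" "c \<in> {..<m}"
  moreover have "t mod m < m" using assms by simp
  ultimately show "cyc ((a + t) mod m) ((b + t) mod m) ((c + t) mod m) = cyc a b c"
    by (simp add: rot_eq cyc_shift)
qed

lemma rot_bij: fixes m t :: nat assumes "0 < m" shows "bij_betw (\<lambda>x. (x + t) mod m) {..<m} {..<m}"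
proof -
  have inj: "inj_on (\<lambda>x. (x + t) mod m) {..<m}"
  proof (rule inj_onI)
    fix x y assume "x \<in> {..<m}" "y \<in> {..<m}" "(x + t) mod m = (y + t) mod m"
    moreover have "t mod m < m" using assms by simp
    ultimately show "x = y" by (simp add: rot_eq split: if_splits)
  qed
  have sub: "(\<lambda>x. (x + t) mod m) ` {..<m} \<subseteq> {..<m}" using assms by auto
  have "(\<lambda>x. (x + t) mod m) ` {..<m} = {..<m}"
    by (rule endo_inj_surj[OF _ sub inj]) simp
  with inj show ?thesis by (simp add: bij_betw_def)
qed

lemma cp_inv: assumes "bij_betw \<phi> U U" "cp U \<phi>" shows "cp U (inv_into U \<phi>)"
  unfolding cp_def
proof (intro ballI)
  fix a b c assume abc: "a \<in> U" "b \<in> U" "c \<in> U"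
  let ?g = "inv_into U \<phi>"
  have s: "\<And>x. x \<in> U \<Longrightarrow> ?g x \<in> U" "\<And>x. x \<in> U \<Longrightarrow> \<phi> (?g x) = x"
    using assms(1) by (auto simp: bij_betw_def inv_into_into f_inv_into_f)
  show "cyc (?g a) (?g b) (?g c) = cyc a b c"
    using assms(2) abc s unfolding cp_def by metis
qed

lemma matching_edge: "is_matching p X \<Longrightarrow> e \<in> X \<Longrightarrow> \<exists>a b. e = {a,b} \<and> a < b \<and> b < 2*p"
  unfolding is_matching_def by blast

lemma matching_sub: "is_matching p X \<Longrightarrow> e \<in> X \<Longrightarrow> e \<subseteq> {..<2*p}"
  by (drule (1) matching_edge) auto

lemma crosses_img:
  assumes "inj_on \<phi> U" "cp U \<phi>" "a \<in> U" "b \<in> U" "c \<in> U" "d \<in> U"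
  shows "crosses (\<phi> ` {a,b}) (\<phi> ` {c,d}) = crosses {a,b} {c,d}"
  using assms unfolding cp_def by (simp add: crosses_cyc)

lemma crosses_img_edges:
  assumes "inj_on \<phi> {..<2*p}" "cp {..<2*p} \<phi>" "is_matching p X" "is_matching p Y" "e \<in> X" "f \<in> Y"
  shows "crosses (\<phi> ` e) (\<phi> ` f) = crosses e f"
proof -
  obtain a b where "e = {a,b}" "a<b" "b<2*p" using matching_edge[OF assms(3,5)] by blast
  moreover obtain c d where "f = {c,d}" "c<d" "d<2*p" using matching_edge[OF assms(4,6)] by blast
  ultimately show ?thesis using crosses_img[OF assms(1,2)] by simp
qed

lemma matching_img:
  assumes bij: "bij_betw \<phi> {..<2*p} {..<2*p}" and cp: "cp {..<2*p} \<phi>" and X: "is_matching p X"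
  shows "is_matching p (img \<phi> X)"
proof -
  have inj: "inj_on \<phi> {..<2*p}" and im: "\<phi> ` {..<2*p} = {..<2*p}" using bij by (auto simp: bij_betw_def)
  have "\<exists>a b. E = {a,b} \<and> a < b \<and> b < 2*p" if EE: "E \<in> img \<phi> X" for E
  proof -
    obtain e where e: "e \<in> X" "E = \<phi> ` e" using EE unfolding img_def by blast
    obtain a b where ab: "e = {a,b}" "a<b" "b<2*p" using matching_edge[OF X e(1)] by blast
    have ne: "\<phi> a \<noteq> \<phi> b" using inj ab by (metis inj_on_contraD lessThan_iff order.strict_trans nat_neq_iff)
    have lt: "\<phi> a < 2*p" "\<phi> b < 2*p" using im ab by auto
    show ?thesis
    proof (cases "\<phi> a < \<phi> b")
      case True then show ?thesis using e ab lt by auto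
    next
      case False then have "\<phi> b < \<phi> a" using ne by simp
      then show ?thesis using e ab lt by (intro exI[of _ "\<phi> b"] exI[of _ "\<phi> a"]) auto
    qed
  qed
  moreover have "\<exists>!E. E \<in> img \<phi> X \<and> v \<in> E" if v: "v < 2*p" for v
  proof -
    obtain u where u: "u < 2*p" "v = \<phi> u" using im v by (metis imageE lessThan_iff)
    obtain e where e: "e \<in> X" "u \<in> e" using X u unfolding is_matching_def by blast
    have uniq: "\<And>e'. e' \<in> X \<Longrightarrow> u \<in> e' \<Longrightarrow> e' = e" using X u e unfolding is_matching_def by blast
    show ?thesis
    proof (rule ex1I[of _ "\<phi> ` e"])
      show "\<phi> ` e \<in> img \<phi> X \<and> v \<in> \<phi> ` e" using e u by (auto simp: img_def)
    next
      fix E assume E: "E \<in> img \<phi> X \<and> v \<in> E"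
      then obtain e' where e': "e' \<in> X" "E = \<phi> ` e'" by (auto simp: img_def)
      have "e' \<subseteq> {..<2*p}" using matching_sub[OF X e'(1)] .
      then have "u \<in> e'" using E e' u inj by (auto simp: inj_on_def)
      then show "E = \<phi> ` e" using uniq e' by auto
    qed
  qed
  moreover have "\<not> crosses E F" if EF: "E \<in> img \<phi> X" "F \<in> img \<phi> X" for E F
  proof -
    obtain e f where "e \<in> X" "f \<in> X" "E = \<phi> ` e" "F = \<phi> ` f" using EF by (auto simp: img_def)
    then show ?thesis using crosses_img_edges[OF inj cp X X] X unfolding is_matching_def by auto
  qed
  ultimately show ?thesis unfolding is_matching_def by blast
qed

lemma img_inv:
  assumes bij: "bij_betw \<phi> {..<2*p} {..<2*p}" and X: "is_matching p X"
  shows "img (inv_into {..<2*p} \<phi>) (img \<phi> X) = X"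
proof -
  have "inv_into {..<2*p} \<phi> ` \<phi> ` e = e" if "e \<in> X" for e
    using matching_sub[OF X that] bij by (simp add: bij_betw_def inv_into_image_cancel)
  then show ?thesis unfolding img_def image_image by simp
qed

lemma dc_img:
  assumes bij: "bij_betw \<phi> {..<2*p} {..<2*p}" and cp: "cp {..<2*p} \<phi>"
    and X: "is_matching p X" and Y: "is_matching p Y"
  shows "disjoint_compatible (img \<phi> X) (img \<phi> Y) = disjoint_compatible X Y"
proof -
  have inj: "inj_on \<phi> {..<2*p}" using bij by (auto simp: bij_betw_def)
  have injE: "inj_on (\<lambda>e. \<phi> ` e) (X \<union> Y)"
    by (rule inj_onI) (metis UnE X Y inj inj_on_image_eq_iff matching_sub)
  have "img \<phi> X \<inter> img \<phi> Y = (\<lambda>e. \<phi> ` e) ` (X \<inter> Y)"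
    unfolding img_def using injE by (simp add: inj_on_image_Int)
  moreover have "(\<forall>E\<in>img \<phi> X. \<forall>F\<in>img \<phi> Y. \<not> crosses E F) = (\<forall>e\<in>X. \<forall>f\<in>Y. \<not> crosses e f)"
    unfolding img_def using crosses_img_edges[OF inj cp X Y] by auto
  ultimately show ?thesis unfolding disjoint_compatible_def by auto
qed

lemma relabel_degree:
  assumes bij: "bij_betw \<phi> {..<2*p} {..<2*p}" and cp: "cp {..<2*p} \<phi>" and X: "is_matching p X"
  shows "dcm_degree p (img \<phi> X) = dcm_degree p X"
proof -
  let ?U = "{..<2*p}"
  let ?g = "inv_into ?U \<phi>"
  have bij2: "bij_betw ?g ?U ?U" using bij by (rule bij_betw_inv_into)
  have cp2: "cp ?U ?g" using bij cp by (rule cp_inv)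
  have X2: "is_matching p (img \<phi> X)" using matching_img[OF bij cp X] .
  have bk: "img \<phi> (img ?g Z) = Z" if "is_matching p Z" for Z
  proof -
    have "img (inv_into ?U ?g) (img ?g Z) = Z" by (rule img_inv[OF bij2 that])
    moreover have "inv_into ?U ?g x = \<phi> x" if "x \<in> ?U" for x
      using bij that by (simp add: bij_betw_def inv_into_inv_into_eq)
    moreover have "img (inv_into ?U ?g) (img ?g Z) = img \<phi> (img ?g Z)"
    proof -
      have "\<And>e. e \<in> img ?g Z \<Longrightarrow> e \<subseteq> ?U"
        using matching_sub[OF matching_img[OF bij2 cp2 that]] by blast
      then show ?thesis unfolding img_def
        using calculation(2) by (intro image_cong refl) (auto intro!: image_cong)
    qed
    ultimately show ?thesis by simp
  qed
  have "bij_betw (img ?g) {Y. is_matching p Y \<and> disjoint_compatible (img \<phi> X) Y}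
                 {Y. is_matching p Y \<and> disjoint_compatible X Y}"
  proof (rule bij_betw_byWitness[where f'="img \<phi>"])
    show "\<forall>a\<in>{Y. is_matching p Y \<and> disjoint_compatible (img \<phi> X) Y}. img \<phi> (img ?g a) = a"
      using bk by auto
    show "\<forall>a\<in>{Y. is_matching p Y \<and> disjoint_compatible X Y}. img ?g (img \<phi> a) = a"
      using img_inv[OF bij] by auto
    show "img ?g ` {Y. is_matching p Y \<and> disjoint_compatible (img \<phi> X) Y}
        \<subseteq> {Y. is_matching p Y \<and> disjoint_compatible X Y}"
    proof clarify
      fix Y assume Y: "is_matching p Y" "disjoint_compatible (img \<phi> X) Y"
      have "disjoint_compatible (img ?g (img \<phi> X)) (img ?g Y)"
        using dc_img[OF bij2 cp2 X2 Y(1)] Y(2) by simp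
      then show "is_matching p (img ?g Y) \<and> disjoint_compatible X (img ?g Y)"
        using img_inv[OF bij X] matching_img[OF bij2 cp2 Y(1)] by simp
    qed
    show "img \<phi> ` {Y. is_matching p Y \<and> disjoint_compatible X Y}
        \<subseteq> {Y. is_matching p Y \<and> disjoint_compatible (img \<phi> X) Y}"
      using dc_img[OF bij cp X] matching_img[OF bij cp] by auto
  qed
  then show ?thesis unfolding dcm_degree_def by (simp add: bij_betw_same_card)
qed



lemma crosses_sym: "crosses e f = crosses f e"
  unfolding crosses_def by blast

lemma crosses_disj: "crosses e f \<Longrightarrow> e \<inter> f = {}"
  unfolding crosses_def by auto

lemma sep: "\<forall>x\<in>e. x < L \<Longrightarrow> \<forall>y\<in>f. L \<le> y \<Longrightarrow> \<not> crosses e f"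
  unfolding crosses_def by force

lemma partner: "is_matching p X \<Longrightarrow> v < 2*p \<Longrightarrow> \<exists>x. x \<noteq> v \<and> x < 2*p \<and> {v,x} \<in> X"
proof -
  assume X: "is_matching p X" and v: "v < 2*p"
  then obtain e where e: "e \<in> X" "v \<in> e" unfolding is_matching_def by blast
  obtain a b where "e = {a,b}" "a<b" "b<2*p" using matching_edge[OF X e(1)] by blast
  then show ?thesis using e by (auto simp: insert_commute)
qed

lemma uniq: "is_matching p X \<Longrightarrow> e \<in> X \<Longrightarrow> e' \<in> X \<Longrightarrow> v \<in> e \<Longrightarrow> v \<in> e' \<Longrightarrow> v < 2*p \<Longrightarrow> e = e'"
  unfolding is_matching_def by blast

lemma noncr: "is_matching p X \<Longrightarrow> e \<in> X \<Longrightarrow> f \<in> X \<Longrightarrow> \<not> crosses e f"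
  unfolding is_matching_def by blast

definition KE :: "nat \<Rightarrow> nat set set" where
  "KE k = {{2*k, 2*k+3}, {2*k+1, 2*k+2}}"
definition AE :: "nat \<Rightarrow> nat set set" where
  "AE k = {{2*k, 2*k+1}, {2*k+2, 2*k+3}}"

lemma strip:
  assumes X: "is_matching (k+2) X" and P: "P \<subseteq> X" "\<forall>e\<in>P. e \<subseteq> {2*k..<2*k+4}"
    "\<forall>v\<in>{2*k..<2*k+4}. \<exists>e\<in>P. v \<in> e"
  shows "(\<forall>e\<in>X-P. e \<subseteq> {..<2*k}) \<and> is_matching k (X-P)"
proof -
  have low: "e \<subseteq> {..<2*k}" if e: "e \<in> X-P" for e
  proof
    fix x assume x: "x \<in> e"
    have "x < 2*(k+2)" using matching_sub[OF X] e x by auto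
    show "x \<in> {..<2*k}"
    proof (rule ccontr)
      assume "x \<notin> {..<2*k}"
      then have "x \<in> {2*k..<2*k+4}" using \<open>x < 2*(k+2)\<close> by auto
      then obtain e' where "e' \<in> P" "x \<in> e'" using P(3) by blast
      then have "e' = e" using uniq[OF X, of e' e x] P(1) e x \<open>x < 2*(k+2)\<close> by auto
      then show False using e \<open>e' \<in> P\<close> by auto
    qed
  qed
  have "is_matching k (X-P)"
    unfolding is_matching_def
  proof (intro conjI ballI allI impI)
    fix e assume e: "e \<in> X - P"
    obtain a b where "e = {a,b}" "a<b" using matching_edge[OF X] e by blast
    then show "\<exists>a b. e = {a, b} \<and> a < b \<and> b < 2 * k" using low[OF e] by auto
  next
    fix v assume v: "v < 2*k"
    obtain e where e: "e \<in> X" "v \<in> e" using X v unfolding is_matching_def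
      by (metis less_add_same_cancel1 nat_mult_less_cancel_disj order.strict_trans zero_less_numeral add_mult_distrib2 less_add_Suc1 trans_less_add1)
    have "e \<notin> P" using P(2) e v by fastforce
    show "\<exists>!e. e \<in> X - P \<and> v \<in> e"
    proof (rule ex1I[of _ e])
      show "e \<in> X - P \<and> v \<in> e" using e \<open>e \<notin> P\<close> by auto
    next
      fix e' assume "e' \<in> X - P \<and> v \<in> e'"
      then show "e' = e" using uniq[OF X, of e' e v] e v by auto
    qed
  next
    fix e f assume "e \<in> X - P" "f \<in> X - P"
    then show "\<not> crosses e f" using noncr[OF X] by auto
  qed
  with low show ?thesis by blast
qed


lemma key:
  assumes N: "is_matching (k+2) N" and K: "KE k \<subseteq> N" and Y: "is_matching (k+2) Y"
    and dc: "disjoint_compatible N Y"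
  shows "AE k \<subseteq> Y"
proof -
  define L where "L = 2*k"
  have L4: "2*(k+2) = L+4" by (simp add: L_def)
  have KL: "{L, L+3} \<in> N" "{L+1, L+2} \<in> N" using K by (auto simp: KE_def L_def)
  have dis: "N \<inter> Y = {}" and nc: "\<And>e f. e \<in> N \<Longrightarrow> f \<in> Y \<Longrightarrow> \<not> crosses e f"
    using dc unfolding disjoint_compatible_def by auto
  have ncY: "\<And>e f. e \<in> Y \<Longrightarrow> f \<in> Y \<Longrightarrow> \<not> crosses e f" using noncr[OF Y] by blast
  have uY: "\<And>e e' v. e \<in> Y \<Longrightarrow> e' \<in> Y \<Longrightarrow> v \<in> e \<Longrightarrow> v \<in> e' \<Longrightarrow> v < L+4 \<Longrightarrow> e = e'"
    using uniq[OF Y] L4 by metis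
  obtain x where x: "x \<noteq> L+1" "x < L+4" "{L+1,x} \<in> Y" using partner[OF Y, of "L+1"] L4 by auto
  have x0: "x = L"
  proof -
    have "x \<noteq> L+2" using x KL(2) dis by auto
    moreover have "\<not> x < L"
    proof
      assume "x < L"
      then have "crosses {L, L+3} {x, L+1}" by (intro cr_intro2) auto
      then show False using nc[OF KL(1) x(3)] by (simp add: insert_commute)
    qed
    moreover have "x \<noteq> L+3"
    proof
      assume x3: "x = L+3"
      obtain y where y: "y \<noteq> L+2" "y < L+4" "{L+2,y} \<in> Y" using partner[OF Y, of "L+2"] L4 by auto
      have "y \<noteq> L+1" using y KL(2) dis by (auto simp: insert_commute)
      moreover have "y \<noteq> L+3"
      proof
        assume "y = L+3"
        then have "{L+2,y} = {L+1,x}" using uY[OF y(3) x(3), of "L+3"] x3 by auto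
        then show False using x3 \<open>y = L+3\<close> by (auto simp: doubleton_eq_iff)
      qed
      moreover have "\<not> y < L+1"
      proof
        assume "y < L+1"
        then have "crosses {y, L+2} {L+1, L+3}" by (intro cr_intro1) auto
        then show False using ncY[OF y(3) x(3)] x3 by (simp add: insert_commute)
      qed
      ultimately show False using y by auto
    qed
    ultimately show ?thesis using x by auto
  qed
  obtain y where y: "y \<noteq> L+2" "y < L+4" "{L+2,y} \<in> Y" using partner[OF Y, of "L+2"] L4 by auto
  have y3: "y = L+3"
  proof -
    have "y \<noteq> L+1" using y KL(2) dis by (auto simp: insert_commute)
    moreover have "y \<noteq> L"
    proof
      assume "y = L"
      then have "{L+2,y} = {L+1,x}" using uY[OF y(3) x(3), of L] x0 by auto
      then show False using x0 \<open>y = L\<close> by (auto simp: doubleton_eq_iff)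
    qed
    moreover have "\<not> y < L"
    proof
      assume "y < L"
      then have "crosses {L, L+3} {y, L+2}" by (intro cr_intro2) auto
      then show False using nc[OF KL(1) y(3)] by (simp add: insert_commute)
    qed
    ultimately show ?thesis using y by auto
  qed
  show ?thesis using x(3) y(3) x0 y3 by (auto simp: AE_def L_def insert_commute)
qed


lemma matching_low: "is_matching k Z \<Longrightarrow> e \<in> Z \<Longrightarrow> x \<in> e \<Longrightarrow> x < 2*k"
  using matching_sub by blast

lemma AE_high: "e \<in> AE k \<Longrightarrow> x \<in> e \<Longrightarrow> 2*k \<le> x"
  unfolding AE_def by auto
lemma KE_high: "e \<in> KE k \<Longrightarrow> x \<in> e \<Longrightarrow> 2*k \<le> x"
  unfolding KE_def by auto

lemma add_AE:
  assumes Z: "is_matching k Z"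
  shows "is_matching (k+2) (Z \<union> AE k)"
  unfolding is_matching_def
proof (intro conjI ballI allI impI)
  fix e assume "e \<in> Z \<union> AE k"
  then show "\<exists>a b. e = {a, b} \<and> a < b \<and> b < 2 * (k+2)"
  proof
    assume "e \<in> Z" then obtain a b where "e = {a,b}" "a<b" "b<2*k" using matching_edge[OF Z] by blast
    then show ?thesis by (intro exI[of _ a] exI[of _ b]) auto
  next
    assume "e \<in> AE k"
    then have "e = {2*k,2*k+1} \<or> e = {2*k+2,2*k+3}" by (simp add: AE_def)
    then show ?thesis
    proof
      assume "e = {2*k,2*k+1}" then show ?thesis by (intro exI[of _ "2*k"] exI[of _ "2*k+1"]) auto
    next
      assume "e = {2*k+2,2*k+3}" then show ?thesis by (intro exI[of _ "2*k+2"] exI[of _ "2*k+3"]) auto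
    qed
  qed
next
  fix v assume v: "v < 2*(k+2)"
  show "\<exists>!e. e \<in> Z \<union> AE k \<and> v \<in> e"
  proof (cases "v < 2*k")
    case True
    then obtain e where e: "e \<in> Z" "v \<in> e" using Z unfolding is_matching_def by blast
    show ?thesis
    proof (rule ex1I[of _ e])
      show "e \<in> Z \<union> AE k \<and> v \<in> e" using e by auto
    next
      fix e' assume "e' \<in> Z \<union> AE k \<and> v \<in> e'"
      then show "e' = e" using uniq[OF Z, of e' e v] e True AE_high[of e' k v] by auto
    qed
  next
    case False
    then have "v = 2*k \<or> v = 2*k+1 \<or> v = 2*k+2 \<or> v = 2*k+3" using v by auto
    then obtain e where e: "e \<in> AE k" "v \<in> e" unfolding AE_def by auto
    have "e' = e" if "e' \<in> Z \<union> AE k" "v \<in> e'" for e'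
    proof -
      have "e' \<notin> Z" using matching_low[OF Z, of e' v] that False by auto
      then have "e' \<in> AE k" using that by auto
      then show ?thesis using e that False v unfolding AE_def by auto
    qed
    then show ?thesis using e by blast
  qed
next
  fix e f assume e: "e \<in> Z \<union> AE k" and f: "f \<in> Z \<union> AE k"
  have AA: "\<not> crosses e f" if "e \<in> AE k" "f \<in> AE k" for e f
  proof -
    have "\<not> crosses {2*k, 2*k+1} {2*k+2, 2*k+3}" by (rule sep[where L="2*k+2"]) auto
    moreover have "\<not> crosses e e" for e :: "nat set" unfolding crosses_def by auto
    ultimately show ?thesis using that unfolding AE_def by (auto simp: crosses_sym)
  qed
  have ZA: "\<not> crosses e f" if "e \<in> Z" "f \<in> AE k" for e f
    using sep[of e "2*k" f] matching_low[OF Z that(1)] AE_high[OF that(2)] by blast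
  show "\<not> crosses e f"
    using e f ZA AA noncr[OF Z] crosses_sym by blast
qed

lemma core:
  assumes N: "is_matching (k+2) N" and K: "KE k \<subseteq> N"
  shows "is_matching k (N - KE k) \<and> dcm_degree (k+2) N = dcm_degree k (N - KE k)"
proof -
  have KEp: "\<forall>e\<in>KE k. e \<subseteq> {2*k..<2*k+4}" "\<forall>v\<in>{2*k..<2*k+4}. \<exists>e\<in>KE k. v \<in> e"
    unfolding KE_def by auto
  have AEp: "\<forall>e\<in>AE k. e \<subseteq> {2*k..<2*k+4}" "\<forall>v\<in>{2*k..<2*k+4}. \<exists>e\<in>AE k. v \<in> e"
    unfolding AE_def by auto
  obtain NKlow: "\<forall>e\<in>N - KE k. e \<subseteq> {..<2*k}" and NK: "is_matching k (N - KE k)"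
    using strip[OF N K KEp] by blast
  let ?S1 = "{Y. is_matching (k+2) Y \<and> disjoint_compatible N Y}"
  let ?S2 = "{Z. is_matching k Z \<and> disjoint_compatible (N - KE k) Z}"
  have ZA: "Z \<inter> AE k = {}" if "is_matching k Z" for Z
    using matching_low[OF that] AE_high by (fastforce simp: AE_def)
  have "bij_betw (\<lambda>Y. Y - AE k) ?S1 ?S2"
  proof (rule bij_betw_byWitness[where f'="\<lambda>Z. Z \<union> AE k"])
    show "\<forall>Y\<in>?S1. Y - AE k \<union> AE k = Y" using key[OF N K] by auto
    show "\<forall>Z\<in>?S2. Z \<union> AE k - AE k = Z" using ZA by auto
    show "(\<lambda>Y. Y - AE k) ` ?S1 \<subseteq> ?S2"
    proof clarify
      fix Y assume Y: "is_matching (k+2) Y" "disjoint_compatible N Y"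
      have "AE k \<subseteq> Y" using key[OF N K Y] .
      then have "is_matching k (Y - AE k)" using strip[OF Y(1) _ AEp] by blast
      moreover have "disjoint_compatible (N - KE k) (Y - AE k)"
        using Y(2) unfolding disjoint_compatible_def by auto
      ultimately show "is_matching k (Y - AE k) \<and> disjoint_compatible (N - KE k) (Y - AE k)" by blast
    qed
    show "(\<lambda>Z. Z \<union> AE k) ` ?S2 \<subseteq> ?S1"
    proof clarify
      fix Z assume Z: "is_matching k Z" "disjoint_compatible (N - KE k) Z"
      have m: "is_matching (k+2) (Z \<union> AE k)" using add_AE[OF Z(1)] .
      have KA: "KE k \<inter> AE k = {}" unfolding KE_def AE_def by (auto simp: doubleton_eq_iff)
      have d1: "N \<inter> (Z \<union> AE k) = {}"
      proof (rule ccontr)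
        assume "N \<inter> (Z \<union> AE k) \<noteq> {}"
        then obtain e where e: "e \<in> N" "e \<in> Z \<union> AE k" by blast
        show False
        proof (cases "e \<in> KE k")
          case True
          then have "\<exists>x\<in>e. 2*k \<le> x" unfolding KE_def by auto
          then obtain x where "x \<in> e" "2*k \<le> x" by blast
          then show False using True KA e(2) matching_low[OF Z(1), of e x] by auto
        next
          case False
          show False
          proof (cases "e \<in> Z")
            case True then show False using Z(2) e False unfolding disjoint_compatible_def by auto
          next
            case False2: False
            then have "e \<in> AE k" using e by auto
            then have "\<exists>x\<in>e. 2*k \<le> x" unfolding AE_def by auto
            then obtain x where "x \<in> e" "2*k \<le> x" by blast
            moreover have "e \<subseteq> {..<2*k}" using NKlow e(1) False by blast
            ultimately show False by auto
          qed
        qed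
      qed
      have d2: "\<not> crosses e f" if e: "e \<in> N" and f: "f \<in> Z \<union> AE k" for e f
      proof (cases "e \<in> KE k")
        case True
        show ?thesis
        proof (cases "f \<in> Z")
          case True
          then show ?thesis using sep[of f "2*k" e] matching_low[OF Z(1) True] KE_high[OF \<open>e \<in> KE k\<close>]
            crosses_sym by blast
        next
          case False
          then have "f \<in> AE k" using f by auto
          then have "e \<inter> f \<noteq> {}" using \<open>e \<in> KE k\<close> unfolding KE_def AE_def by auto
          then show ?thesis using crosses_disj by blast
        qed
      next
        case False
        show ?thesis
        proof (cases "f \<in> Z")
          case True
          then show ?thesis using Z(2) e False unfolding disjoint_compatible_def by auto
        next
          case F2: False
          then have "f \<in> AE k" using f by auto
          then show ?thesis using sep[of e "2*k" f] NKlow e False AE_high[of f k] by blast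
        qed
      qed
      show "is_matching (k+2) (Z \<union> AE k) \<and> disjoint_compatible N (Z \<union> AE k)"
        using m d1 d2 unfolding disjoint_compatible_def by blast
    qed
  qed
  then have "card ?S1 = card ?S2" by (rule bij_betw_same_card)
  then show ?thesis using NK unfolding dcm_degree_def by simp
qed



lemma modsub: fixes x m :: nat assumes "m \<le> x" "x < 2*m" shows "x mod m = x - m"
proof -
  have "x mod m = (x - m) mod m" using assms(1) by (simp add: le_mod_geq)
  also have "\<dots> = x - m" using assms by (intro mod_less) linarith
  finally show ?thesis .
qed

lemma fval: fixes i m r :: nat assumes "i < m" "4 \<le> m" "r < 4"
  shows "((i+r) mod m + (m - (i+4) mod m)) mod m = m - 4 + r"
proof (cases "i + 4 < m")
  case True
  then have a: "(i+4) mod m = i+4" "(i+r) mod m = i+r" using assms by auto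
  have "i + r + (m - (i+4)) = m - 4 + r" using True assms by linarith
  then show ?thesis unfolding a using assms by simp
next
  case False
  then have a: "(i+4) mod m = i+4-m" using assms by (intro modsub) linarith+
  show ?thesis
  proof (cases "i + r < m")
    case True
    then have b: "(i+r) mod m = i+r" by simp
    show ?thesis unfolding a b using False True assms by (subst modsub) linarith+
  next
    case F2: False
    then have b: "(i+r) mod m = i+r-m" using assms by (intro modsub) linarith+
    have "i + r - m + (m - (i + 4 - m)) = m - 4 + r" using False F2 assms by linarith
    then show ?thesis unfolding a b using assms by simp
  qed
qed


theorem mainTheorem8:
  fixes k i :: nat and M N :: "nat set set"
  assumes "k \<ge> 1"
    and "is_matching k M"
    and "is_matching (k+2) N"
    and "i < 2*(k+2)"
    and "block_at (k+2) i \<subseteq> N"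
    and "\<exists>s. rot (2*k) s M = remove_pair (k+2) i (block_at (k+2) i) N"
  shows "dcm_degree (k+2) N = dcm_degree k M"
proof -
  obtain s where s: "rot (2*k) s M = remove_pair (k+2) i (block_at (k+2) i) N" using assms(6) by blast
  define m where "m = 2*(k+2)"
  define t where "t = m - (i+4) mod m"
  define f where "f = (\<lambda>x. (x + t) mod m)"
  have m0: "0 < m" by (simp add: m_def)
  have bij: "bij_betw f {..<2*(k+2)} {..<2*(k+2)}" unfolding f_def using rot_bij[OF m0] by (simp add: m_def)
  have cpf: "cp {..<2*(k+2)} f" unfolding f_def using rot_cp[OF m0] by (simp add: m_def)
  have inj: "inj_on f {..<2*(k+2)}" using bij by (simp add: bij_betw_def)
  have jm: "(i+4) mod m \<le> m" using m0 by (simp add: less_imp_le)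
  have rp: "remove_pair (k+2) i (block_at (k+2) i) N = img f (N - block_at (k+2) i)"
  proof -
    have eq: "(\<lambda>x. (x + 2*(k+2) - (i+4) mod (2*(k+2))) mod (2*(k+2))) = f"
      unfolding f_def t_def using jm by (auto simp: m_def)
    show ?thesis unfolding remove_pair_def img_def eq by (rule refl)
  qed
  define N1 where "N1 = img f N"
  have N1m: "is_matching (k+2) N1" unfolding N1_def by (rule matching_img[OF bij cpf assms(3)])
  have degN: "dcm_degree (k+2) N1 = dcm_degree (k+2) N" unfolding N1_def
    by (rule relabel_degree[OF bij cpf assms(3)])
  have fv: "f ((i+r) mod m) = 2*k + r" if "r < 4" for r
    unfolding f_def t_def using fval[of i m r] that assms(4) by (simp add: m_def)
  have fv0: "f (i mod m) = 2*k" using fv[of 0] by simp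
  have f1: "f ((i+1) mod m) = 2*k+1" using fv[of 1] by simp
  have f2: "f ((i+2) mod m) = 2*k+2" using fv[of 2] by simp
  have f3: "f ((i+3) mod m) = 2*k+3" using fv[of 3] by simp
  have blk: "block_at (k+2) i = {{i mod m, (i+3) mod m}, {(i+1) mod m, (i+2) mod m}}"
    unfolding block_at_def m_def by simp
  have KE1: "img f (block_at (k+2) i) = KE k"
    unfolding blk img_def image_insert image_empty fv0 f1 f2 f3 KE_def by (rule refl)
  have injE: "inj_on (\<lambda>e. f ` e) N"
  proof (rule inj_onI)
    fix e e' assume "e \<in> N" "e' \<in> N" "f ` e = f ` e'"
    then show "e = e'" using inj_on_image_eq_iff[OF inj matching_sub[OF assms(3)] matching_sub[OF assms(3)]]
      by blast
  qed
  have "img f (block_at (k+2) i) \<subseteq> img f N" unfolding img_def by (rule image_mono[OF assms(5)])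
  then have KN1: "KE k \<subseteq> N1" using KE1 unfolding N1_def by simp
  have diff: "N1 - KE k = img f (N - block_at (k+2) i)"
  proof -
    have "(\<lambda>e. f ` e) ` (N - block_at (k+2) i) = (\<lambda>e. f ` e) ` N - (\<lambda>e. f ` e) ` block_at (k+2) i"
      by (rule inj_on_image_set_diff[OF injE]) (use assms(5) in blast)+
    then show ?thesis unfolding N1_def KE1[symmetric] img_def by simp
  qed
  have c: "dcm_degree (k+2) N1 = dcm_degree k (N1 - KE k)" using core[OF N1m KN1] by blast
  have rM: "N1 - KE k = img (\<lambda>x. (x + s) mod (2*k)) M"
    using diff rp s unfolding rot_def img_def by simp
  have k0: "0 < 2*k" using assms(1) by simp
  have "dcm_degree k (img (\<lambda>x. (x + s) mod (2*k)) M) = dcm_degree k M"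
    by (rule relabel_degree[OF rot_bij[OF k0] rot_cp[OF k0] assms(2)])
  then show ?thesis using degN c rM by simp
qed

end
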